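(* Let $Y$ be a real random variable and $\mathbf X=(X_1,\dots,X_p)^\top$ a random vector in $\mathbb R^p$. Let $J\subset\{1,\dots,p\}$ be a set of indices, $\mathbf X_J=(X_j)_{j\in J}$ and $\mathbf X_{\bar J}=(X_j)_{j\notin J}$. Assume the additive regression model $$Y = f_J(\mathbf X_J)+f_{\bar J}(\mathbf X_{\bar J})+\varepsilon,$$ where $f_J,f_{\bar J}$ are measurable functions with $\mathbb E[f_J(\mathbf X_J)^2]<\infty$ and $\mathbb E[f_{\bar J}(\mathbf X_{\bar J})^2]<\infty$, and $\varepsilon$ is a random variable with $\mathbb E[\varepsilon\mid\mathbf X]=0$ and $\mathbb E[\varepsilon^2\mid \mathbf X]$ finite. Then the grouped variable importance of $\mathbf X_J$ satisfies $$\mathcal I(\mathbf X_J)=2\,\mathrm{Var}\big[f_J(\mathbf X_J)\big].$$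
   Context: Let $f(\mathbf x)=\mathbb E[Y\mid \mathbf X=\mathbf x]$ be the regression function (here $f(\mathbf x)=f_J(\mathbf x_J)+f_{\bar J}(\mathbf x_{\bar J})$). For a set of indices $J=\{j_1<\dots<j_k\}\subset\{1,\dots,p\}$, let $\mathbf X'_J=(X'_{j_1},\dots,X'_{j_k})^\top$ be a random vector with the same distribution as $\mathbf X_J$, independent of $(\mathbf X,Y)$ (so independent of $Y$ and of all predictors), and let $\mathbf X_{(J)}$ be the vector obtained from $\mathbf X$ by replacing each coordinate $X_{j}$, $j\in J$, by $X'_{j}$. The grouped (permutation) variable importance of $\mathbf X_J$ is $$\mathcal I(\mathbf X_J):=\mathbb E\big[(Y-f(\mathbf X_{(J)}))^2\big]-\mathbb E\big[(Y-f(\mathbf X))^2\big].$$ For a single index $j$, $\mathcal I(X_j)$ denotes $\mathcal I(\mathbf X_{\{j\}})$. *)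

theory Defs
  imports "HOL-Probability.Probability"
begin

definition replace_coords :: "'i set \<Rightarrow> ('i \<Rightarrow> real) \<Rightarrow> ('i \<Rightarrow> real) \<Rightarrow> ('i \<Rightarrow> real)" where
  "replace_coords J x' x = (\<lambda>j. if j \<in> J then x' j else x j)"

text \<open>Grouped permutation variable importance of X_J, for regression function f,
  with X' an independent copy of X_J (only its coordinates in J are used).\<close>
definition grouped_importance ::
  "'a measure \<Rightarrow> ('a \<Rightarrow> real) \<Rightarrow> (('i \<Rightarrow> real) \<Rightarrow> real) \<Rightarrow> ('a \<Rightarrow> 'i \<Rightarrow> real)
     \<Rightarrow> ('a \<Rightarrow> 'i \<Rightarrow> real) \<Rightarrow> 'i set \<Rightarrow> real" where
  "grouped_importance M Y f X X' J =
     (LINT \<omega>|M. (Y \<omega> - f (replace_coords J (X' \<omega>) (X \<omega>)))\<^sup>2)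
   - (LINT \<omega>|M. (Y \<omega> - f (X \<omega>))\<^sup>2)"

end

theory Submission
  imports Defs
begin


lemma integrable_mult_sq:
  fixes f g :: "'a \<Rightarrow> real"
  assumes "integrable M (\<lambda>x. (f x)\<^sup>2)" "integrable M (\<lambda>x. (g x)\<^sup>2)"
    "f \<in> borel_measurable M" "g \<in> borel_measurable M"
  shows "integrable M (\<lambda>x. f x * g x)"
proof (rule Bochner_Integration.integrable_bound[where f="\<lambda>x. (f x)\<^sup>2 + (g x)\<^sup>2"])
  show "integrable M (\<lambda>x. (f x)\<^sup>2 + (g x)\<^sup>2)" using assms by auto
  show "(\<lambda>x. f x * g x) \<in> borel_measurable M" using assms by measurable
  show "AE x in M. norm (f x * g x) \<le> norm ((f x)\<^sup>2 + (g x)\<^sup>2)"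
  proof (rule AE_I2)
    fix x
    have "\<bar>f x * g x\<bar> \<le> (f x)\<^sup>2 + (g x)\<^sup>2"
    proof -
      have "0 \<le> (\<bar>f x\<bar> - \<bar>g x\<bar>)\<^sup>2" by simp
      then have "\<bar>f x * g x\<bar> * 2 \<le> (f x)\<^sup>2 + (g x)\<^sup>2"
        by (simp add: power2_eq_square abs_mult algebra_simps)
      then show ?thesis using abs_ge_zero[of "f x * g x"] by linarith
    qed
    then show "norm (f x * g x) \<le> norm ((f x)\<^sup>2 + (g x)\<^sup>2)" by simp
  qed
qed

lemma (in prob_space) integrable_from_sq:
  fixes f :: "'a \<Rightarrow> real"
  assumes "integrable M (\<lambda>x. (f x)\<^sup>2)" "f \<in> borel_measurable M"
  shows "integrable M f"
  using integrable_mult_sq[OF assms(1) _ assms(2), of "\<lambda>_. 1"] by simp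

theorem proposition1:
  fixes M :: "'a measure"
    and X X' :: "'a \<Rightarrow> ('i::finite \<Rightarrow> real)"
    and Y \<epsilon> :: "'a \<Rightarrow> real"
    and J :: "'i set"
    and fJ fJbar :: "('i \<Rightarrow> real) \<Rightarrow> real"
  assumes prob: "prob_space M"
    and X_meas: "X \<in> M \<rightarrow>\<^sub>M (\<Pi>\<^sub>M i\<in>UNIV. borel)"
    and Y_meas: "Y \<in> borel_measurable M"
    and eps_meas: "\<epsilon> \<in> borel_measurable M"
    and fJ_meas: "fJ \<in> borel_measurable (\<Pi>\<^sub>M i\<in>UNIV. borel)"
    and fJbar_meas: "fJbar \<in> borel_measurable (\<Pi>\<^sub>M i\<in>UNIV. borel)"
    and fJ_dep: "\<And>x y. (\<forall>j\<in>J. x j = y j) \<Longrightarrow> fJ x = fJ y"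
    and fJbar_dep: "\<And>x y. (\<forall>j\<in>-J. x j = y j) \<Longrightarrow> fJbar x = fJbar y"
    and fJ_sq: "integrable M (\<lambda>\<omega>. (fJ (X \<omega>))\<^sup>2)"
    and fJbar_sq: "integrable M (\<lambda>\<omega>. (fJbar (X \<omega>))\<^sup>2)"
    and model: "\<And>\<omega>. \<omega> \<in> space M \<Longrightarrow> Y \<omega> = fJ (X \<omega>) + fJbar (X \<omega>) + \<epsilon> \<omega>"
    and eps_sq: "integrable M (\<lambda>\<omega>. (\<epsilon> \<omega>)\<^sup>2)"
    and eps_cond: "AE \<omega> in M. real_cond_exp M (vimage_algebra (space M) X (\<Pi>\<^sub>M i\<in>UNIV. borel)) \<epsilon> \<omega> = 0"
    and X'_meas: "(\<lambda>\<omega>. restrict (X' \<omega>) J) \<in> M \<rightarrow>\<^sub>M (\<Pi>\<^sub>M j\<in>J. borel)"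
    and X'_distr: "distr M (\<Pi>\<^sub>M j\<in>J. borel) (\<lambda>\<omega>. restrict (X' \<omega>) J)
                 = distr M (\<Pi>\<^sub>M j\<in>J. borel) (\<lambda>\<omega>. restrict (X \<omega>) J)"
    and X'_indep: "prob_space.indep_set M
                     {(\<lambda>\<omega>. restrict (X' \<omega>) J) -` A \<inter> space M | A. A \<in> sets (\<Pi>\<^sub>M j\<in>J. borel)}
                     {(\<lambda>\<omega>. (X \<omega>, Y \<omega>)) -` B \<inter> space M | B. B \<in> sets ((\<Pi>\<^sub>M i\<in>UNIV. borel) \<Otimes>\<^sub>M borel)}"
  shows "grouped_importance M Y (\<lambda>x. fJ x + fJbar x) X X' J
       = 2 * (LINT \<omega>|M. (fJ (X \<omega>) - (LINT \<omega>'|M. fJ (X \<omega>')))\<^sup>2)"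
proof -
  interpret P: prob_space M by (fact prob)
  define U where "U = (\<lambda>\<omega>. restrict (X' \<omega>) J)"
  define V where "V = (\<lambda>\<omega>. restrict (X \<omega>) J)"
  define ext :: "('i \<Rightarrow> real) \<Rightarrow> ('i \<Rightarrow> real)" where "ext = (\<lambda>u j. if j \<in> J then u j else 0)"
  define g where "g = (\<lambda>u. fJ (ext u))"
  define W where "W = (\<lambda>\<omega>. (X \<omega>, Y \<omega>))"
  define h :: "('i \<Rightarrow> real) \<times> real \<Rightarrow> real" where "h = (\<lambda>(x,y). y - fJ x - fJbar x)"
  define h2 :: "('i \<Rightarrow> real) \<times> real \<Rightarrow> real" where "h2 = (\<lambda>(x,y). fJ x)"
  define A where "A = (\<lambda>\<omega>. fJ (X \<omega>))"
  define B where "B = (\<lambda>\<omega>. g (U \<omega>))"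
  define e where "e = (\<lambda>\<omega>. h (W \<omega>))"
  note [measurable] = X_meas Y_meas eps_meas fJ_meas fJbar_meas
  have U_meas[measurable]: "U \<in> M \<rightarrow>\<^sub>M (\<Pi>\<^sub>M j\<in>J. borel)" using X'_meas unfolding U_def .
  have V_meas[measurable]: "V \<in> M \<rightarrow>\<^sub>M (\<Pi>\<^sub>M j\<in>J. borel)" unfolding V_def by measurable
  have ext_meas[measurable]: "ext \<in> (\<Pi>\<^sub>M j\<in>J. borel) \<rightarrow>\<^sub>M (\<Pi>\<^sub>M i\<in>UNIV. borel)"
  proof (rule measurable_PiM_single')
    fix i :: 'i
    show "(\<lambda>u. ext u i) \<in> (\<Pi>\<^sub>M j\<in>J. borel) \<rightarrow>\<^sub>M borel"
    proof (cases "i \<in> J")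
      case True
      then show ?thesis unfolding ext_def by simp
    next
      case False
      then show ?thesis unfolding ext_def by simp
    qed
  qed (auto simp: ext_def)
  have g_meas[measurable]: "g \<in> borel_measurable (\<Pi>\<^sub>M j\<in>J. borel)" unfolding g_def by measurable
  have W_meas[measurable]: "W \<in> M \<rightarrow>\<^sub>M ((\<Pi>\<^sub>M i\<in>UNIV. borel) \<Otimes>\<^sub>M borel)" unfolding W_def by measurable
  have h_meas[measurable]: "h \<in> borel_measurable ((\<Pi>\<^sub>M i\<in>UNIV. borel) \<Otimes>\<^sub>M borel)" unfolding h_def by measurable
  have h2_meas[measurable]: "h2 \<in> borel_measurable ((\<Pi>\<^sub>M i\<in>UNIV. borel) \<Otimes>\<^sub>M borel)" unfolding h2_def by measurable
  have A_meas[measurable]: "A \<in> borel_measurable M" unfolding A_def by measurable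
  have B_meas[measurable]: "B \<in> borel_measurable M" unfolding B_def by measurable
  have e_meas[measurable]: "e \<in> borel_measurable M" unfolding e_def by measurable
  have e_eps: "\<And>\<omega>. \<omega> \<in> space M \<Longrightarrow> e \<omega> = \<epsilon> \<omega>"
    using model by (simp add: e_def h_def W_def)
  have AgV: "\<And>\<omega>. A \<omega> = g (V \<omega>)"
    unfolding A_def g_def V_def ext_def by (rule fJ_dep) simp
  have A_h2: "\<And>\<omega>. A \<omega> = h2 (W \<omega>)" by (simp add: A_def h2_def W_def)
  have BZ: "\<And>\<omega>. B \<omega> = fJ (replace_coords J (X' \<omega>) (X \<omega>))"
    unfolding B_def g_def U_def ext_def replace_coords_def by (rule fJ_dep) simp
  have barZ: "\<And>\<omega>. fJbar (replace_coords J (X' \<omega>) (X \<omega>)) = fJbar (X \<omega>)"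
    unfolding replace_coords_def by (rule fJbar_dep) simp
  have A2: "integrable M (\<lambda>\<omega>. (A \<omega>)\<^sup>2)" using fJ_sq unfolding A_def .
  have e2: "integrable M (\<lambda>\<omega>. (e \<omega>)\<^sup>2)"
    using eps_sq by (rule Bochner_Integration.integrable_cong[THEN iffD1, rotated -1]) (simp_all add: e_eps)
  have gsq_meas: "(\<lambda>u. (g u)\<^sup>2) \<in> borel_measurable (\<Pi>\<^sub>M j\<in>J. borel)" by measurable
  have distrUV: "distr M (\<Pi>\<^sub>M j\<in>J. borel) U = distr M (\<Pi>\<^sub>M j\<in>J. borel) V"
    using X'_distr unfolding U_def V_def .
  have "integrable (distr M (\<Pi>\<^sub>M j\<in>J. borel) V) (\<lambda>u. (g u)\<^sup>2)"
    using A2 by (subst integrable_distr_eq[OF V_meas gsq_meas]) (simp add: AgV)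
  then have B2: "integrable M (\<lambda>\<omega>. (B \<omega>)\<^sup>2)"
    unfolding distrUV[symmetric] by (subst (asm) integrable_distr_eq[OF U_meas gsq_meas]) (simp add: B_def)
  have B2eq: "(LINT \<omega>|M. (B \<omega>)\<^sup>2) = (LINT \<omega>|M. (A \<omega>)\<^sup>2)"
  proof -
    have "(LINT \<omega>|M. (B \<omega>)\<^sup>2) = integral\<^sup>L (distr M (\<Pi>\<^sub>M j\<in>J. borel) U) (\<lambda>u. (g u)\<^sup>2)"
      by (simp add: integral_distr[OF U_meas gsq_meas] B_def)
    also have "\<dots> = integral\<^sup>L (distr M (\<Pi>\<^sub>M j\<in>J. borel) V) (\<lambda>u. (g u)\<^sup>2)" by (simp add: distrUV)
    also have "\<dots> = (LINT \<omega>|M. (A \<omega>)\<^sup>2)" by (simp add: integral_distr[OF V_meas gsq_meas] AgV)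
    finally show ?thesis .
  qed
  have B1eq: "(LINT \<omega>|M. B \<omega>) = (LINT \<omega>|M. A \<omega>)"
  proof -
    have "(LINT \<omega>|M. B \<omega>) = integral\<^sup>L (distr M (\<Pi>\<^sub>M j\<in>J. borel) U) g"
      by (simp add: integral_distr[OF U_meas g_meas] B_def)
    also have "\<dots> = integral\<^sup>L (distr M (\<Pi>\<^sub>M j\<in>J. borel) V) g" by (simp add: distrUV)
    also have "\<dots> = (LINT \<omega>|M. A \<omega>)" by (simp add: integral_distr[OF V_meas g_meas] AgV)
    finally show ?thesis .
  qed
  have A1: "integrable M A" by (rule P.integrable_from_sq[OF A2 A_meas])
  have B1: "integrable M B" by (rule P.integrable_from_sq[OF B2 B_meas])
  have e1: "integrable M e" by (rule P.integrable_from_sq[OF e2 e_meas])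
  have AB: "integrable M (\<lambda>\<omega>. A \<omega> * B \<omega>)" by (rule integrable_mult_sq[OF A2 B2 A_meas B_meas])
  have Ae: "integrable M (\<lambda>\<omega>. A \<omega> * e \<omega>)" by (rule integrable_mult_sq[OF A2 e2 A_meas e_meas])
  have Be: "integrable M (\<lambda>\<omega>. B \<omega> * e \<omega>)" by (rule integrable_mult_sq[OF B2 e2 B_meas e_meas])
  define F where "F = vimage_algebra (space M) X (\<Pi>\<^sub>M i\<in>UNIV. borel)"
  have Xfun: "X \<in> space M \<rightarrow> space (\<Pi>\<^sub>M i\<in>UNIV. (borel::real measure))"
    using measurable_space[OF X_meas] by auto
  have subalg: "subalgebra M F"
    unfolding subalgebra_def F_def
  proof
    show "space (vimage_algebra (space M) X (\<Pi>\<^sub>M i\<in>UNIV. borel)) = space M" by simp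
    show "sets (vimage_algebra (space M) X (\<Pi>\<^sub>M i\<in>UNIV. borel)) \<subseteq> sets M"
      using measurable_sets[OF X_meas] by (auto simp: sets_vimage_algebra2[OF Xfun])
  qed
  interpret S: finite_measure_subalgebra M F
    by unfold_locales (fact subalg)
  have XF[measurable]: "X \<in> F \<rightarrow>\<^sub>M (\<Pi>\<^sub>M i\<in>UNIV. borel)"
    unfolding F_def by (rule measurable_vimage_algebra1[OF Xfun])
  have AF: "A \<in> borel_measurable F" unfolding A_def by measurable
  have Aeps: "integrable M (\<lambda>\<omega>. A \<omega> * \<epsilon> \<omega>)"
    using Ae by (rule Bochner_Integration.integrable_cong[THEN iffD1, rotated -1]) (simp_all add: e_eps)
  have eps1: "integrable M (\<lambda>\<omega>. 1 * \<epsilon> \<omega>)"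
    using e1 by (rule Bochner_Integration.integrable_cong[THEN iffD1, rotated -1]) (simp_all add: e_eps)
  have condF: "AE \<omega> in M. real_cond_exp M F \<epsilon> \<omega> = 0" using eps_cond unfolding F_def .
  have EAe: "(LINT \<omega>|M. A \<omega> * e \<omega>) = 0"
  proof -
    have "(LINT \<omega>|M. A \<omega> * e \<omega>) = (LINT \<omega>|M. A \<omega> * \<epsilon> \<omega>)"
      by (rule Bochner_Integration.integral_cong) (simp_all add: e_eps)
    also have "\<dots> = (LINT \<omega>|M. A \<omega> * real_cond_exp M F \<epsilon> \<omega>)"
      using S.real_cond_exp_intg(2)[OF Aeps AF eps_meas] by simp
    also have "\<dots> = (LINT \<omega>|M. 0)"
      by (rule integral_cong_AE) (use condF in auto)
    finally show ?thesis by simp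
  qed
  have Ee: "(LINT \<omega>|M. e \<omega>) = 0"
  proof -
    have "(LINT \<omega>|M. e \<omega>) = (LINT \<omega>|M. 1 * \<epsilon> \<omega>)"
      by (rule Bochner_Integration.integral_cong) (simp_all add: e_eps)
    also have "\<dots> = (LINT \<omega>|M. 1 * real_cond_exp M F \<epsilon> \<omega>)"
      using S.real_cond_exp_intg(2)[OF eps1 _ eps_meas] by simp
    also have "\<dots> = (LINT \<omega>|M. 0)"
      by (rule integral_cong_AE) (use condF in auto)
    finally show ?thesis by simp
  qed
  have indS: "P.indep_sets (case_bool {U -` A \<inter> space M | A. A \<in> sets (\<Pi>\<^sub>M j\<in>J. borel)} {W -` B \<inter> space M | B. B \<in> sets ((\<Pi>\<^sub>M i\<in>UNIV. borel) \<Otimes>\<^sub>M borel)}) UNIV"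
    using X'_indep unfolding P.indep_set_def U_def W_def .
  have indgen: "P.indep_var borel (\<lambda>\<omega>. g (U \<omega>)) borel (\<lambda>\<omega>. k (W \<omega>))"
    if k_meas[measurable]: "k \<in> borel_measurable ((\<Pi>\<^sub>M i\<in>UNIV. borel) \<Otimes>\<^sub>M borel)" for k
    unfolding P.indep_var_def P.indep_vars_def2
  proof (intro conjI)
    show "\<forall>i\<in>UNIV. P.random_variable (case_bool (borel::real measure) borel i) (case_bool (\<lambda>\<omega>. g (U \<omega>)) (\<lambda>\<omega>. k (W \<omega>)) i)"
    proof
      fix i :: bool
      have m1: "(\<lambda>\<omega>. g (U \<omega>)) \<in> borel_measurable M" by measurable
      have m2: "(\<lambda>\<omega>. k (W \<omega>)) \<in> borel_measurable M" by measurable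
      show "P.random_variable (case_bool (borel::real measure) borel i) (case_bool (\<lambda>\<omega>. g (U \<omega>)) (\<lambda>\<omega>. k (W \<omega>)) i)"
        using m1 m2 by (cases i) simp_all
    qed
    show "P.indep_sets (\<lambda>i. {case_bool (\<lambda>\<omega>. g (U \<omega>)) (\<lambda>\<omega>. k (W \<omega>)) i -` A \<inter> space M |A. A \<in> sets (case_bool (borel::real measure) borel i)}) UNIV"
    proof (rule P.indep_sets_mono_sets[OF indS])
      fix i :: bool
      show "{case_bool (\<lambda>\<omega>. g (U \<omega>)) (\<lambda>\<omega>. k (W \<omega>)) i -` A \<inter> space M |A. A \<in> sets (case_bool (borel::real measure) borel i)}
        \<subseteq> case_bool {U -` A \<inter> space M | A. A \<in> sets (\<Pi>\<^sub>M j\<in>J. borel)} {W -` B \<inter> space M | B. B \<in> sets ((\<Pi>\<^sub>M i\<in>UNIV. borel) \<Otimes>\<^sub>M borel)} i"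
      proof (cases i)
        case True
        have "{(\<lambda>\<omega>. g (U \<omega>)) -` A \<inter> space M |A. A \<in> sets (borel::real measure)}
            \<subseteq> {U -` A \<inter> space M | A. A \<in> sets (\<Pi>\<^sub>M j\<in>J. borel)}"
        proof (rule subsetI)
          fix S assume "S \<in> {(\<lambda>\<omega>. g (U \<omega>)) -` A \<inter> space M |A. A \<in> sets (borel::real measure)}"
          then obtain A :: "real set" where SA: "S = (\<lambda>\<omega>. g (U \<omega>)) -` A \<inter> space M" and A: "A \<in> sets borel" by blast
          have "g -` A \<inter> space (\<Pi>\<^sub>M j\<in>J. borel) \<in> sets (\<Pi>\<^sub>M j\<in>J. borel)"
            using g_meas A by (rule measurable_sets)
          moreover have "S = U -` (g -` A \<inter> space (\<Pi>\<^sub>M j\<in>J. borel)) \<inter> space M"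
            using measurable_space[OF U_meas] SA by auto
          ultimately show "S \<in> {U -` A \<inter> space M | A. A \<in> sets (\<Pi>\<^sub>M j\<in>J. borel)}" by blast
        qed
        then show ?thesis using True by simp
      next
        case False
        have "{(\<lambda>\<omega>. k (W \<omega>)) -` A \<inter> space M |A. A \<in> sets (borel::real measure)}
            \<subseteq> {W -` B \<inter> space M | B. B \<in> sets ((\<Pi>\<^sub>M i\<in>UNIV. borel) \<Otimes>\<^sub>M borel)}"
        proof (rule subsetI)
          fix S assume "S \<in> {(\<lambda>\<omega>. k (W \<omega>)) -` A \<inter> space M |A. A \<in> sets (borel::real measure)}"
          then obtain A :: "real set" where SA: "S = (\<lambda>\<omega>. k (W \<omega>)) -` A \<inter> space M" and A: "A \<in> sets borel" by blast
          have "k -` A \<inter> space ((\<Pi>\<^sub>M i\<in>UNIV. borel) \<Otimes>\<^sub>M borel) \<in> sets ((\<Pi>\<^sub>M i\<in>UNIV. borel) \<Otimes>\<^sub>M borel)"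
            using k_meas A by (rule measurable_sets)
          moreover have "S = W -` (k -` A \<inter> space ((\<Pi>\<^sub>M i\<in>UNIV. borel) \<Otimes>\<^sub>M borel)) \<inter> space M"
            using measurable_space[OF W_meas] SA by auto
          ultimately show "S \<in> {W -` B \<inter> space M | B. B \<in> sets ((\<Pi>\<^sub>M i\<in>UNIV. borel) \<Otimes>\<^sub>M borel)}" by blast
        qed
        then show ?thesis using False by simp
      qed
    qed
  qed
  have ind1: "P.indep_var borel (\<lambda>\<omega>. g (U \<omega>)) borel (\<lambda>\<omega>. h (W \<omega>))" by (rule indgen[OF h_meas])
  have ind2: "P.indep_var borel (\<lambda>\<omega>. g (U \<omega>)) borel (\<lambda>\<omega>. h2 (W \<omega>))" by (rule indgen[OF h2_meas])
  have EBe: "(LINT \<omega>|M. B \<omega> * e \<omega>) = (LINT \<omega>|M. B \<omega>) * (LINT \<omega>|M. e \<omega>)"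
    using P.indep_var_lebesgue_integral[OF ind1] B1 e1 by (simp add: B_def e_def comp_def)
  have EAB: "(LINT \<omega>|M. A \<omega> * B \<omega>) = (LINT \<omega>|M. A \<omega>) * (LINT \<omega>|M. B \<omega>)"
  proof -
    have "(LINT \<omega>|M. B \<omega> * A \<omega>) = (LINT \<omega>|M. B \<omega>) * (LINT \<omega>|M. A \<omega>)"
    proof -
      have Af: "A = (\<lambda>\<omega>. h2 (W \<omega>))" by (rule ext) (rule A_h2)
      show ?thesis using P.indep_var_lebesgue_integral[OF ind2] B1 A1 unfolding Af by (simp add: B_def)
    qed
    then show ?thesis by (simp add: mult.commute)
  qed
  have I1: "(LINT \<omega>|M. (Y \<omega> - (fJ (replace_coords J (X' \<omega>) (X \<omega>)) + fJbar (replace_coords J (X' \<omega>) (X \<omega>))))\<^sup>2)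
      = (LINT \<omega>|M. (A \<omega> - B \<omega> + e \<omega>)\<^sup>2)"
    by (rule Bochner_Integration.integral_cong) (simp_all add: model e_eps BZ[symmetric] barZ A_def algebra_simps)
  have I2: "(LINT \<omega>|M. (Y \<omega> - (fJ (X \<omega>) + fJbar (X \<omega>)))\<^sup>2) = (LINT \<omega>|M. (e \<omega>)\<^sup>2)"
    by (rule Bochner_Integration.integral_cong) (simp_all add: model e_eps)
  have exp1: "(\<lambda>\<omega>. (A \<omega> - B \<omega> + e \<omega>)\<^sup>2) = (\<lambda>\<omega>. ((((A \<omega>)\<^sup>2 + (B \<omega>)\<^sup>2) + (e \<omega>)\<^sup>2 - 2 * (A \<omega> * B \<omega>)) + 2 * (A \<omega> * e \<omega>)) - 2 * (B \<omega> * e \<omega>))"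
    by (rule ext) (simp add: power2_eq_square algebra_simps)
  have J1: "(LINT \<omega>|M. (A \<omega> - B \<omega> + e \<omega>)\<^sup>2) = (((LINT \<omega>|M. (A \<omega>)\<^sup>2) + (LINT \<omega>|M. (B \<omega>)\<^sup>2) + (LINT \<omega>|M. (e \<omega>)\<^sup>2)
       - 2 * (LINT \<omega>|M. A \<omega> * B \<omega>)) + 2 * (LINT \<omega>|M. A \<omega> * e \<omega>)) - 2 * (LINT \<omega>|M. B \<omega> * e \<omega>)"
    unfolding exp1 using A2 B2 e2 AB Ae Be by simp
  define c where "c = (LINT \<omega>|M. A \<omega>)"
  have exp2: "(\<lambda>\<omega>. (A \<omega> - c)\<^sup>2) = (\<lambda>\<omega>. ((A \<omega>)\<^sup>2 - 2 * c * A \<omega>) + c\<^sup>2)"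
    by (rule ext) (simp add: power2_eq_square algebra_simps)
  have J2: "(LINT \<omega>|M. (A \<omega> - c)\<^sup>2) = (LINT \<omega>|M. (A \<omega>)\<^sup>2) - 2 * c * c + c\<^sup>2"
    unfolding exp2 using A2 A1 by (simp add: c_def P.prob_space)
  show ?thesis
    unfolding grouped_importance_def I1 I2 J1
    using J2 B2eq B1eq EAB EAe EBe Ee unfolding A_def c_def
    by (simp add: power2_eq_square algebra_simps)
qed

end
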